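(* Let $n\ge1$, $\delta>0$, and $\hat r\in\mathbb R^n$ with $\hat r_1\ge\hat r_2\ge\cdots\ge\hat r_n$. Let $t_0$ be the unique solution of $\sum_{i=1}^n(\hat r_i-t)_+=\delta$, and define $$t^\star:=\inf\Big\{t\ge t_0:\ \sum_{i:\hat r_i>t}(\hat r_1-\hat r_i)\le\delta\Big\}.$$ Then the vector $\pi^\star\in\mathbb R^n$ given by $$\pi_i^\star=\frac{(\hat r_i-t^\star)_+}{\delta}\ (i=2,\dots,n),\qquad \pi_1^\star=1-\frac1\delta\sum_{i=2}^n(\hat r_i-t^\star)_+$$ belongs to $\Delta_n$ and is an optimal solution of $$\min_{\pi\in\Delta_n}\ \max_{\|\Delta\|_1\le\delta}\mathrm{Reg}(\pi,\hat r+\Delta).$$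
   Context: $\Delta_n:=\{q\in\mathbb R^n_+:\sum_iq_i=1\}$; $(a)_+:=\max\{a,0\}$. For $\pi\in\Delta_n$ and $s\in\mathbb R^n$, $\mathrm{Reg}(\pi,s):=\max_{\beta\in\Delta_n}\langle\beta-\pi,s\rangle$. *)

theory Defs
  imports Complex_Main
begin

text \<open>Vectors in R^n are represented as functions nat => real, using the indices 1..n.\<close>

definition pos_part :: "real \<Rightarrow> real" where
  "pos_part a = max a 0"

definition simplex :: "nat \<Rightarrow> (nat \<Rightarrow> real) set" where
  "simplex n = {q. (\<forall>i\<in>{1..n}. 0 \<le> q i) \<and> (\<Sum>i=1..n. q i) = 1}"

definition inner_n :: "nat \<Rightarrow> (nat \<Rightarrow> real) \<Rightarrow> (nat \<Rightarrow> real) \<Rightarrow> real" where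
  "inner_n n x y = (\<Sum>i=1..n. x i * y i)"

definition Reg :: "nat \<Rightarrow> (nat \<Rightarrow> real) \<Rightarrow> (nat \<Rightarrow> real) \<Rightarrow> real" where
  "Reg n \<pi> s = Sup {inner_n n (\<lambda>i. \<beta> i - \<pi> i) s | \<beta>. \<beta> \<in> simplex n}"

definition robust_obj :: "nat \<Rightarrow> real \<Rightarrow> (nat \<Rightarrow> real) \<Rightarrow> (nat \<Rightarrow> real) \<Rightarrow> real" where
  "robust_obj n \<delta> r \<pi> =
     Sup {Reg n \<pi> (\<lambda>i. r i + d i) | d. (\<Sum>i=1..n. \<bar>d i\<bar>) \<le> \<delta>}"

end

theory Submission
  imports Defs
begin

lemma Reg_eq:
  assumes n: "n \<ge> 1"
  shows "Reg n \<pi> s = Max (s ` {1..n}) - (\<Sum>i=1..n. \<pi> i * s i)"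
proof -
  have fin: "finite (s ` {1..n})" and ne: "s ` {1..n} \<noteq> {}" using n by auto
  obtain j where j: "j \<in> {1..n}" "s j = Max (s ` {1..n})"
    using Max_in[OF fin ne] by auto
  have inn: "inner_n n (\<lambda>i. \<beta> i - \<pi> i) s = (\<Sum>i=1..n. \<beta> i * s i) - (\<Sum>i=1..n. \<pi> i * s i)" for \<beta>
    unfolding inner_n_def by (simp add: left_diff_distrib sum_subtractf)
  let ?e = "(\<lambda>i. if i = j then 1 else 0) :: nat \<Rightarrow> real"
  have e: "?e \<in> simplex n" using j unfolding simplex_def by auto
  have es0: "\<And>i. ?e i * s i = (if i = j then s i else 0)" by simp
  have es: "(\<Sum>i=1..n. ?e i * s i) = s j" unfolding es0 using j by simp
  have ub: "(\<Sum>i=1..n. \<beta> i * s i) \<le> Max (s ` {1..n})" if b: "\<beta> \<in> simplex n" for \<beta>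
  proof -
    have "(\<Sum>i=1..n. \<beta> i * s i) \<le> (\<Sum>i=1..n. \<beta> i * Max (s ` {1..n}))"
      apply (rule sum_mono) apply (rule mult_left_mono)
      using b fin by (auto simp: simplex_def)
    also have "\<dots> = Max (s ` {1..n})" using b by (simp add: simplex_def sum_distrib_right[symmetric])
    finally show ?thesis .
  qed
  show ?thesis unfolding Reg_def inn
    apply (rule cSup_eq_maximum)
    using e es j ub by (auto intro!: exI[of _ ?e])
qed

lemma key_d:
  fixes d \<pi> :: "nat \<Rightarrow> real"
  assumes p: "\<pi> \<in> simplex n" and j: "j \<in> {1..n}" and d: "(\<Sum>i=1..n. \<bar>d i\<bar>) \<le> \<delta>"
  shows "d j - (\<Sum>i=1..n. \<pi> i * d i) \<le> \<delta> * (1 - \<pi> j)"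
proof -
  let ?A = "{1..n} - {j}"
  have nn: "\<And>i. i \<in> {1..n} \<Longrightarrow> 0 \<le> \<pi> i" and s1: "(\<Sum>i=1..n. \<pi> i) = 1" using p by (auto simp: simplex_def)
  have split: "(\<Sum>i=1..n. f i) = f j + (\<Sum>i\<in>?A. f i)" for f :: "nat \<Rightarrow> real"
    using j by (simp add: sum.remove)
  have sA: "(\<Sum>i\<in>?A. \<pi> i) = 1 - \<pi> j" using split[of \<pi>] s1 by simp
  have le: "\<pi> i \<le> 1 - \<pi> j" if "i \<in> ?A" for i
    using member_le_sum[of i ?A \<pi>] that nn sA by auto
  have pj: "\<pi> j \<le> 1" using sA nn by (metis diff_ge_0_iff_ge Diff_iff sum_nonneg)
  have "- (\<Sum>i\<in>?A. \<pi> i * d i) \<le> (\<Sum>i\<in>?A. (1 - \<pi> j) * \<bar>d i\<bar>)"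
  proof -
    have "- (\<Sum>i\<in>?A. \<pi> i * d i) = (\<Sum>i\<in>?A. - (\<pi> i * d i))" by (simp add: sum_negf)
    also have "\<dots> \<le> (\<Sum>i\<in>?A. (1 - \<pi> j) * \<bar>d i\<bar>)"
    proof (rule sum_mono)
      fix i assume i: "i \<in> ?A"
      have "- (\<pi> i * d i) \<le> \<pi> i * \<bar>d i\<bar>" using nn[of i] i
        by (metis abs_ge_minus_self minus_mult_right mult_left_mono DiffD1)
      also have "\<dots> \<le> (1 - \<pi> j) * \<bar>d i\<bar>" using le[OF i] by (simp add: mult_right_mono)
      finally show "- (\<pi> i * d i) \<le> (1 - \<pi> j) * \<bar>d i\<bar>" .
    qed
    finally show ?thesis .
  qed
  moreover have "d j * (1 - \<pi> j) \<le> \<bar>d j\<bar> * (1 - \<pi> j)" using pj by (simp add: mult_right_mono)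
  moreover have "(1 - \<pi> j) * (\<Sum>i=1..n. \<bar>d i\<bar>) \<le> (1 - \<pi> j) * \<delta>" using pj d by (simp add: mult_left_mono)
  moreover have "(\<Sum>i\<in>?A. (1 - \<pi> j) * \<bar>d i\<bar>) = (1 - \<pi> j) * (\<Sum>i\<in>?A. \<bar>d i\<bar>)" by (simp add: sum_distrib_left)
  moreover have "(1 - \<pi> j) * (\<Sum>i=1..n. \<bar>d i\<bar>) = (1 - \<pi> j) * \<bar>d j\<bar> + (1 - \<pi> j) * (\<Sum>i\<in>?A. \<bar>d i\<bar>)"
    using split[of "\<lambda>i. \<bar>d i\<bar>"] by (simp add: distrib_left)
  moreover have "d j - (\<Sum>i=1..n. \<pi> i * d i) = d j * (1 - \<pi> j) - (\<Sum>i\<in>?A. \<pi> i * d i)"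
    using split[of "\<lambda>i. \<pi> i * d i"] by (simp add: algebra_simps)
  ultimately show ?thesis by (simp add: algebra_simps)
qed

lemma robust_eq:
  assumes n: "n \<ge> 1" and p: "\<pi> \<in> simplex n" and dl: "\<delta> \<ge> 0"
  shows "robust_obj n \<delta> r \<pi> = Max ((\<lambda>j. r j + \<delta> - \<delta> * \<pi> j) ` {1..n}) - (\<Sum>i=1..n. \<pi> i * r i)"
proof -
  let ?B = "Max ((\<lambda>j. r j + \<delta> - \<delta> * \<pi> j) ` {1..n}) - (\<Sum>i=1..n. \<pi> i * r i)"
  have fin: "finite ((\<lambda>j. r j + \<delta> - \<delta> * \<pi> j) ` {1..n})" and ne: "(\<lambda>j. r j + \<delta> - \<delta> * \<pi> j) ` {1..n} \<noteq> {}" using n by auto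
  have exp: "(\<Sum>i=1..n. \<pi> i * (r i + d i)) = (\<Sum>i=1..n. \<pi> i * r i) + (\<Sum>i=1..n. \<pi> i * d i)" for d
    by (simp add: distrib_left sum.distrib)
  have ub: "Reg n \<pi> (\<lambda>i. r i + d i) \<le> ?B" if d: "(\<Sum>i=1..n. \<bar>d i\<bar>) \<le> \<delta>" for d
  proof -
    have "Max ((\<lambda>i. r i + d i) ` {1..n}) \<le> Max ((\<lambda>j. r j + \<delta> - \<delta> * \<pi> j) ` {1..n}) + (\<Sum>i=1..n. \<pi> i * d i)"
    proof (subst Max_le_iff)
      show "finite ((\<lambda>i. r i + d i) ` {1..n})" "(\<lambda>i. r i + d i) ` {1..n} \<noteq> {}" using n by auto
      show "\<forall>a\<in>(\<lambda>i. r i + d i) ` {1..n}. a \<le> Max ((\<lambda>j. r j + \<delta> - \<delta> * \<pi> j) ` {1..n}) + (\<Sum>i=1..n. \<pi> i * d i)"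
      proof
      fix a assume "a \<in> (\<lambda>i. r i + d i) ` {1..n}"
      then obtain j where j: "1 \<le> j" "j \<le> n" and a: "a = r j + d j" by auto
      have "d j - (\<Sum>i=1..n. \<pi> i * d i) \<le> \<delta> * (1 - \<pi> j)" using key_d[OF p _ d] j by auto
      moreover have "r j + \<delta> - \<delta> * \<pi> j \<le> Max ((\<lambda>j. r j + \<delta> - \<delta> * \<pi> j) ` {1..n})"
        using j fin by auto
      ultimately show "a \<le> Max ((\<lambda>j. r j + \<delta> - \<delta> * \<pi> j) ` {1..n}) + (\<Sum>i=1..n. \<pi> i * d i)"
        unfolding a by (simp add: algebra_simps)
    qed
    qed
    then show ?thesis using Reg_eq[OF n] exp by simp
  qed
  obtain j where j: "j \<in> {1..n}" "r j + \<delta> - \<delta> * \<pi> j = Max ((\<lambda>j. r j + \<delta> - \<delta> * \<pi> j) ` {1..n})"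
    using Max_in[OF fin ne] by auto
  define d where "d = (\<lambda>i. if i = j then \<delta> else 0::real)"
  have dn: "(\<Sum>i=1..n. \<bar>d i\<bar>) \<le> \<delta>" using j dl by (simp add: d_def if_distrib cong: if_cong)
  have pd: "(\<Sum>i=1..n. \<pi> i * d i) = \<delta> * \<pi> j" using j by (simp add: d_def if_distrib cong: if_cong)
  have "r j + \<delta> \<le> Max ((\<lambda>i. r i + d i) ` {1..n})" using j by (auto simp: d_def intro!: Max_ge)
  moreover have R: "Reg n \<pi> (\<lambda>i. r i + d i) = Max ((\<lambda>i. r i + d i) ` {1..n}) - (\<Sum>i=1..n. \<pi> i * r i) - \<delta> * \<pi> j"
    using Reg_eq[OF n, of \<pi> "\<lambda>i. r i + d i"] exp[of d] pd by simp
  ultimately have "?B \<le> Reg n \<pi> (\<lambda>i. r i + d i)" using j(2) by linarith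
  hence eq: "Reg n \<pi> (\<lambda>i. r i + d i) = ?B" using ub[OF dn] by simp
  show ?thesis unfolding robust_obj_def
    apply (rule cSup_eq_maximum)
    using eq dn ub by (auto intro!: exI[of _ d])
qed

theorem mainTheorem5:
  fixes n :: nat and \<delta> t0 :: real and r :: "nat \<Rightarrow> real"
  assumes n: "n \<ge> 1"
    and delta: "\<delta> > 0"
    and sorted: "\<And>i j. 1 \<le> i \<Longrightarrow> i \<le> j \<Longrightarrow> j \<le> n \<Longrightarrow> r j \<le> r i"
    and t0: "t0 = (THE t. (\<Sum>i=1..n. pos_part (r i - t)) = \<delta>)"
  shows "let tstar = Inf {t. t \<ge> t0 \<and> (\<Sum>i\<in>{i\<in>{1..n}. r i > t}. (r 1 - r i)) \<le> \<delta>};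
             \<pi>star = (\<lambda>i. if i = 1 then 1 - (\<Sum>j=2..n. pos_part (r j - tstar)) / \<delta>
                          else pos_part (r i - tstar) / \<delta>)
         in \<pi>star \<in> simplex n \<and>
            (\<forall>\<pi>\<in>simplex n. robust_obj n \<delta> r \<pi>star \<le> robust_obj n \<delta> r \<pi>)"
proof -
  define F where "F t = (\<Sum>i=1..n. pos_part (r i - t))" for t
  define h where "h t = (\<Sum>i\<in>{i\<in>{1..n}. r i > t}. (r 1 - r i))" for t
  have hlin: "h t * c = (\<Sum>j=1..n. if r j > t then (r 1 - r j) * c else 0)" for t c
  proof -
    have "h t * c = (\<Sum>i\<in>{i\<in>{1..n}. r i > t}. (r 1 - r i) * c)" unfolding h_def by (simp add: sum_distrib_right)
    also have "\<dots> = (\<Sum>j=1..n. if r j > t then (r 1 - r j) * c else 0)" by (rule sum.inter_filter) simp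
    finally show ?thesis .
  qed
  define S where "S = {t. t \<ge> t0 \<and> h t \<le> \<delta>}"
  define ts where "ts = Inf S"
  define ps where "ps = (\<lambda>i. if i = 1 then 1 - (\<Sum>j=2..n. pos_part (r j - ts)) / \<delta> else pos_part (r i - ts) / \<delta>)"
  have r1max: "\<And>i. i \<in> {1..n} \<Longrightarrow> r i \<le> r 1" using sorted n by auto
  have ppnn: "\<And>a. pos_part a \<ge> 0" and ppge: "\<And>a. pos_part a \<ge> a" by (auto simp: pos_part_def)
  have ppmono: "\<And>a b. a \<le> b \<Longrightarrow> pos_part a \<le> pos_part b" by (auto simp: pos_part_def)
  have split1: "(\<Sum>i=1..n. f i) = f 1 + (\<Sum>i=2..n. f i)" for f :: "nat \<Rightarrow> real"
    using n by (simp add: sum.atLeast_Suc_atMost numeral_2_eq_2)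
  have Fmono: "F b \<le> F a" if "a \<le> b" for a b
    unfolding F_def by (rule sum_mono, rule ppmono) (use that in auto)
  have Fstrict: "F b < F a" if "a < b" "r 1 > a" for a b
  proof -
    have "pos_part (r 1 - b) < pos_part (r 1 - a)" using that by (auto simp: pos_part_def)
    moreover have "(\<Sum>i=2..n. pos_part (r i - b)) \<le> (\<Sum>i=2..n. pos_part (r i - a))"
      by (rule sum_mono, rule ppmono) (use that in auto)
    ultimately show ?thesis unfolding F_def split1 by linarith
  qed
  have Fzero: "F a = 0" if "r 1 \<le> a" for a
    unfolding F_def using that r1max by (intro sum.neutral) (force simp: pos_part_def)
  have Fpos: "r 1 > a" if "F a > 0" for a
    using Fzero[of a] that by force
  have Fge1: "F a \<ge> pos_part (r 1 - a)" for a
    unfolding F_def split1 using sum_nonneg[of "{2..n}" "\<lambda>i. pos_part (r i - a)"] ppnn by auto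
  have Fcont: "isCont F x" for x
    unfolding F_def pos_part_def by (intro continuous_intros)
  have "\<exists>t. r 1 - \<delta> \<le> t \<and> t \<le> r 1 \<and> F t = \<delta>"
  proof (rule IVT2)
    show "F (r 1) \<le> \<delta>" using Fzero[of "r 1"] delta by simp
    show "\<delta> \<le> F (r 1 - \<delta>)" using Fge1[of "r 1 - \<delta>"] delta by (simp add: pos_part_def)
  qed (use delta Fcont in auto)
  then obtain t1 where t1: "F t1 = \<delta>" by blast
  have uniq: "a = b" if "F a = \<delta>" "F b = \<delta>" for a b
  proof (rule ccontr)
    assume "a \<noteq> b"
    then consider "a < b" | "b < a" by linarith
    then show False
    proof cases
      case 1 then show ?thesis using Fstrict[OF 1 Fpos] that delta by auto
    next
      case 2 then show ?thesis using Fstrict[OF 2 Fpos] that delta by auto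
    qed
  qed
  have "t0 = (THE t. F t = \<delta>)" using t0 by (simp add: F_def)
  hence t0eq: "t0 = t1" using t1 uniq by (auto intro: the_equality)
  have Ft0: "F t0 = \<delta>" using t0eq t1 by simp
  have r1t0: "r 1 > t0" using Fpos Ft0 delta by auto
  have h_empty: "h t = 0" if "t \<ge> r 1" for t
    unfolding h_def using that r1max by (intro sum.neutral) force
  have Sne: "max (r 1) t0 \<in> S" unfolding S_def using h_empty[of "max (r 1) t0"] delta by auto
  have Sbdd: "bdd_below S" unfolding S_def by (auto intro: bdd_belowI[of _ t0])
  have Sne2: "S \<noteq> {}" using Sne by auto
  have ts_ge: "ts \<ge> t0" unfolding ts_def using Sne2 by (intro cInf_greatest) (auto simp: S_def)
  have ts_le: "ts \<le> s" if "s \<in> S" for s unfolding ts_def using Sbdd that by (rule cInf_lower[rotated])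
  have below: "h u > \<delta>" if "t0 \<le> u" "u < ts" for u
    using ts_le[of u] that unfolding S_def by force
  have hts: "h ts \<le> \<delta>"
  proof (rule ccontr)
    assume hbad: "\<not> h ts \<le> \<delta>"
    define v where "v = Min (insert (ts + 1) (r ` {j\<in>{1..n}. r j > ts}))"
    have vfin: "finite (insert (ts + 1) (r ` {j\<in>{1..n}. r j > ts}))" by auto
    have v_gt: "v > ts" unfolding v_def using vfin by (subst Min_gr_iff) auto
    have v_le: "v \<le> r j" if "j \<in> {1..n}" "r j > ts" for j
      unfolding v_def using vfin that by (intro Min_le) auto
    have "v \<le> s" if s: "s \<in> S" for s
    proof (rule ccontr)
      assume "\<not> v \<le> s"
      hence sv: "s < v" by simp
      have "ts \<le> s" using ts_le s by simp
      have "{i\<in>{1..n}. r i > s} = {i\<in>{1..n}. r i > ts}"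
        using v_le sv \<open>ts \<le> s\<close> by force
      hence "h s = h ts" unfolding h_def by simp
      thus False using s hbad unfolding S_def by simp
    qed
    hence "v \<le> ts" unfolding ts_def using Sne by (intro cInf_greatest) auto
    thus False using v_gt by simp
  qed
  have Fts: "F ts \<le> \<delta>" using Fmono[OF ts_ge] Ft0 by simp
  have ps_simplex: "ps \<in> simplex n"
  proof -
    have nn: "0 \<le> ps i" if "i \<in> {1..n}" for i
    proof (cases "i = 1")
      case True
      have "(\<Sum>j=2..n. pos_part (r j - ts)) \<le> F ts" unfolding F_def split1 using ppnn[of "r 1 - ts"] by linarith
      hence "(\<Sum>j=2..n. pos_part (r j - ts)) / \<delta> \<le> 1" using Fts delta by simp
      then show ?thesis using True by (simp add: ps_def)
    next
      case False then show ?thesis using ppnn delta by (simp add: ps_def)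
    qed
    have "(\<Sum>i=1..n. ps i) = ps 1 + (\<Sum>i=2..n. ps i)" by (rule split1)
    also have "(\<Sum>i=2..n. ps i) = (\<Sum>i=2..n. pos_part (r i - ts) / \<delta>)"
      by (rule sum.cong) (auto simp: ps_def)
    also have "\<dots> = (\<Sum>j=2..n. pos_part (r j - ts)) / \<delta>" by (simp add: sum_divide_distrib)
    finally have "(\<Sum>i=1..n. ps i) = 1" by (simp add: ps_def)
    then show ?thesis using nn unfolding simplex_def by auto
  qed
  define G where "G t = (\<Sum>j=1..n. pos_part (r j - t) * (r 1 - r j))" for t
  have P_alt: "(\<Sum>i=1..n. \<pi> i * r i) = r 1 - (\<Sum>j=1..n. \<pi> j * (r 1 - r j))" if "\<pi> \<in> simplex n" for \<pi>
  proof -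
    have "(\<Sum>j=1..n. \<pi> j * (r 1 - r j)) = r 1 * (\<Sum>j=1..n. \<pi> j) - (\<Sum>i=1..n. \<pi> i * r i)"
    proof -
      have "(\<Sum>j=1..n. \<pi> j * r 1) = r 1 * (\<Sum>j=1..n. \<pi> j)" by (simp add: sum_distrib_left mult.commute)
      thus ?thesis by (simp add: right_diff_distrib sum_subtractf)
    qed
    thus ?thesis using that by (simp add: simplex_def)
  qed
  have Pps: "(\<Sum>i=1..n. ps i * r i) = r 1 - G ts / \<delta>"
  proof -
    have "(\<Sum>j=1..n. ps j * (r 1 - r j)) = (\<Sum>j=1..n. pos_part (r j - ts) * (r 1 - r j) / \<delta>)"
      by (rule sum.cong) (auto simp: ps_def)
    also have "\<dots> = G ts / \<delta>" by (simp add: G_def sum_divide_distrib)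
    finally show ?thesis using P_alt[OF ps_simplex] by simp
  qed
  define m where "m \<pi> = Max ((\<lambda>j. r j + \<delta> - \<delta> * \<pi> j) ` {1..n})" for \<pi> :: "nat \<Rightarrow> real"
  have mfin: "finite ((\<lambda>j. r j + \<delta> - \<delta> * \<pi> j) ` {1..n})" "((\<lambda>j. r j + \<delta> - \<delta> * \<pi> j) ` {1..n}) \<noteq> {}" for \<pi> :: "nat \<Rightarrow> real"
    using n by auto
  have mps: "m ps \<le> ts + \<delta>"
    unfolding m_def
  proof (subst Max_le_iff[OF mfin], safe)
    fix j assume j: "j \<in> {1..n}"
    show "r j + \<delta> - \<delta> * ps j \<le> ts + \<delta>"
    proof (cases "j = 1")
      case True
      have "(\<Sum>j=2..n. pos_part (r j - ts)) + pos_part (r 1 - ts) \<le> \<delta>" using Fts unfolding F_def split1 by linarith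
      then show ?thesis using True delta ppge[of "r 1 - ts"] by (simp add: ps_def algebra_simps)
    next
      case False then show ?thesis using delta ppge[of "r j - ts"] by (simp add: ps_def)
    qed
  qed
  have robps: "robust_obj n \<delta> r ps \<le> ts + \<delta> - r 1 + G ts / \<delta>"
    using robust_eq[OF n ps_simplex, of \<delta> r] delta mps Pps unfolding m_def by simp
  have "robust_obj n \<delta> r ps \<le> robust_obj n \<delta> r \<pi>" if p: "\<pi> \<in> simplex n" for \<pi>
  proof -
    define M where "M = m \<pi> - \<delta>"
    have pnn: "\<And>i. i \<in> {1..n} \<Longrightarrow> 0 \<le> \<pi> i" and ps1: "(\<Sum>i=1..n. \<pi> i) = 1" using p by (auto simp: simplex_def)
    have Mj: "r j - \<delta> * \<pi> j \<le> M" if "j \<in> {1..n}" for j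
    proof -
      have "r j + \<delta> - \<delta> * \<pi> j \<le> m \<pi>" unfolding m_def using that by (intro Max_ge[OF mfin(1)]) auto
      thus ?thesis unfolding M_def by linarith
    qed
    have ppj: "pos_part (r j - M) \<le> \<delta> * \<pi> j" if "j \<in> {1..n}" for j
      using Mj[OF that] pnn[OF that] delta by (auto simp: pos_part_def)
    have "F M \<le> (\<Sum>j=1..n. \<delta> * \<pi> j)" unfolding F_def by (rule sum_mono) (use ppj in auto)
    hence FM: "F M \<le> \<delta>" using ps1 by (simp add: sum_distrib_left[symmetric])
    have M_ge: "M \<ge> t0"
    proof (rule ccontr)
      assume "\<not> M \<ge> t0"
      hence "F t0 < F M" using Fstrict[of M t0] r1t0 by auto
      thus False using FM Ft0 by simp
    qed
    have Ppi: "(\<Sum>i=1..n. \<pi> i * r i) \<le> r 1 - G M / \<delta>"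
    proof -
      have "G M / \<delta> = (\<Sum>j=1..n. pos_part (r j - M) / \<delta> * (r 1 - r j))" by (simp add: G_def sum_divide_distrib)
      also have "\<dots> \<le> (\<Sum>j=1..n. \<pi> j * (r 1 - r j))"
      proof (rule sum_mono)
        fix j assume j: "j \<in> {1..n}"
        have "pos_part (r j - M) / \<delta> \<le> \<pi> j" using ppj[OF j] delta by (simp add: divide_le_eq mult.commute)
        then show "pos_part (r j - M) / \<delta> * (r 1 - r j) \<le> \<pi> j * (r 1 - r j)"
          using r1max[OF j] mult_right_mono[of "pos_part (r j - M) / \<delta>" "\<pi> j" "r 1 - r j"] by simp
      qed
      finally show ?thesis using P_alt[OF p] by simp
    qed
    have key: "\<delta> * ts + G ts \<le> \<delta> * M + G M"
    proof (cases "M \<ge> ts")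
      case True
      have "G ts - G M = (\<Sum>j=1..n. (pos_part (r j - ts) - pos_part (r j - M)) * (r 1 - r j))"
        by (simp add: G_def sum_subtractf left_diff_distrib)
      also have "\<dots> \<le> (\<Sum>j=1..n. if r j > ts then (r 1 - r j) * (M - ts) else 0)"
      proof (rule sum_mono)
        fix j assume j: "j \<in> {1..n}"
        show "(pos_part (r j - ts) - pos_part (r j - M)) * (r 1 - r j) \<le> (if r j > ts then (r 1 - r j) * (M - ts) else 0)"
        proof (cases "r j > ts")
          case True
          have "pos_part (r j - ts) - pos_part (r j - M) \<le> M - ts" using True by (auto simp: pos_part_def)
          then show ?thesis using True r1max[OF j] mult_right_mono[of "pos_part (r j - ts) - pos_part (r j - M)" "M - ts" "r 1 - r j"] by (simp add: mult.commute)
        next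
          case False
          then show ?thesis using \<open>M \<ge> ts\<close> by (simp add: pos_part_def)
        qed
      qed
      also have "\<dots> = h ts * (M - ts)" by (rule hlin[symmetric])
      also have "\<dots> \<le> \<delta> * (M - ts)" using hts True by (simp add: mult_right_mono)
      finally show ?thesis by (simp add: algebra_simps)
    next
      case False
      define u where "u = Max (insert M (r ` {j\<in>{1..n}. r j < ts}))"
      have ufin: "finite (insert M (r ` {j\<in>{1..n}. r j < ts}))" by auto
      have u_lt: "u < ts" unfolding u_def using ufin False by (subst Max_less_iff) auto
      have u_ge: "M \<le> u" unfolding u_def using ufin by (intro Max_ge) auto
      have u_ge2: "r j \<le> u" if "j \<in> {1..n}" "r j < ts" for j unfolding u_def using ufin that by (intro Max_ge) auto
      have hu: "h u > \<delta>" using below[of u] u_lt u_ge M_ge by simp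
      have "\<delta> * (ts - M) \<le> h u * (ts - M)" using hu False by (simp add: mult_right_mono)
      also have "h u * (ts - M) = (\<Sum>j=1..n. if r j > u then (r 1 - r j) * (ts - M) else 0)"
        by (rule hlin)
      also have "\<dots> \<le> (\<Sum>j=1..n. (pos_part (r j - M) - pos_part (r j - ts)) * (r 1 - r j))"
      proof (rule sum_mono)
        fix j assume j: "j \<in> {1..n}"
        show "(if r j > u then (r 1 - r j) * (ts - M) else 0) \<le> (pos_part (r j - M) - pos_part (r j - ts)) * (r 1 - r j)"
        proof (cases "r j > u")
          case True
          hence "r j \<ge> ts" using u_ge2[OF j] by force
          hence "pos_part (r j - M) - pos_part (r j - ts) = ts - M" using False by (auto simp: pos_part_def)
          then show ?thesis using True by (simp add: mult.commute)
        next
          case False2: False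
          have "pos_part (r j - ts) \<le> pos_part (r j - M)" using False by (intro ppmono) simp
          then show ?thesis using False2 r1max[OF j] by simp
        qed
      qed
      also have "\<dots> = G M - G ts"
        by (simp add: G_def sum_subtractf left_diff_distrib)
      finally show ?thesis by (simp add: algebra_simps)
    qed
    have "ts + G ts / \<delta> \<le> M + G M / \<delta>"
    proof -
      have "(\<delta> * ts + G ts) / \<delta> \<le> (\<delta> * M + G M) / \<delta>" using key delta by (simp add: divide_right_mono)
      thus ?thesis using delta by (simp add: add_divide_distrib)
    qed
    moreover have "robust_obj n \<delta> r \<pi> = M + \<delta> - (\<Sum>i=1..n. \<pi> i * r i)"
      using robust_eq[OF n p, of \<delta> r] delta unfolding M_def m_def by simp
    ultimately show ?thesis using robps Ppi by linarith
  qed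
  then show ?thesis using ps_simplex unfolding Let_def ps_def ts_def S_def h_def by simp
qed

end
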